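(* Let $C$ be a cycle of goods and $N$ a set of agents of at most two types. Then there exists a $\frac34$-sufficient allocation of the goods of $C$ to the agents in $N$.
   Context: A cycle of goods has goods $v_1,\dots,v_m$ with edges $v_iv_{i+1}$ and $v_mv_1$. A utility function assigns a non-negative real to each good, extended additively to sets. A bundle is a set of goods inducing a connected subgraph (empty allowed); an $n$-split is a sequence of $n$ pairwise disjoint bundles (possibly empty) with union all goods. $\mathrm{mms}^{(n)}(C,u)=\max_{P_1,\dots,P_n}\min_i u(P_i)$ over all $n$-splits. Agents are of the same type if they have the same utility function. An allocation to agents $1,\dots,n$ with utilities $u_1,\dots,u_n$ is an $n$-split $P_1,\dots,P_n$ with $P_i$ given to agent $i$; for $c>0$ it is $c$-sufficient if $u_i(P_i)\ge c\cdot\mathrm{mms}^{(n)}(C,u_i)$ for all $i$. *)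

theory Defs
  imports Complex_Main
begin

definition cycle_adj :: "nat \<Rightarrow> nat \<Rightarrow> nat \<Rightarrow> bool" where
  "cycle_adj m i j \<longleftrightarrow> i < m \<and> j < m \<and> (j = Suc i mod m \<or> i = Suc j mod m)"

definition is_bundle :: "nat \<Rightarrow> nat set \<Rightarrow> bool" where
  "is_bundle m S \<longleftrightarrow> S \<subseteq> {0..<m} \<and>
     (\<forall>x\<in>S. \<forall>y\<in>S. (x, y) \<in> rtrancl {(a, b). a \<in> S \<and> b \<in> S \<and> cycle_adj m a b})"

definition is_split :: "nat \<Rightarrow> nat \<Rightarrow> (nat \<Rightarrow> nat set) \<Rightarrow> bool" where
  "is_split m n P \<longleftrightarrow> (\<forall>i<n. is_bundle m (P i)) \<and>
     (\<forall>i<n. \<forall>j<n. i \<noteq> j \<longrightarrow> P i \<inter> P j = {}) \<and>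
     (\<Union>i<n. P i) = {0..<m}"

definition util :: "(nat \<Rightarrow> real) \<Rightarrow> nat set \<Rightarrow> real" where
  "util u S = (\<Sum>g\<in>S. u g)"

definition mms :: "nat \<Rightarrow> nat \<Rightarrow> (nat \<Rightarrow> real) \<Rightarrow> real" where
  "mms m n u = (SUP P \<in> {P. is_split m n P}. (MIN i \<in> {0..<n}. util u (P i)))"

definition sufficient :: "real \<Rightarrow> nat \<Rightarrow> nat \<Rightarrow> (nat \<Rightarrow> nat \<Rightarrow> real) \<Rightarrow> (nat \<Rightarrow> nat set) \<Rightarrow> bool" where
  "sufficient c m n U P \<longleftrightarrow> is_split m n P \<and> (\<forall>i<n. util (U i) (P i) \<ge> c * mms m n (U i))"

end

theory Submission
  imports Defs "HOL-Library.FuncSet"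
begin

definition W :: "(nat \<Rightarrow> real) \<Rightarrow> nat \<Rightarrow> nat \<Rightarrow> real" where
  "W w x y = (\<Sum>i\<in>{x..<y}. w i)"

definition HS :: "(nat \<Rightarrow> real) \<Rightarrow> real \<Rightarrow> nat \<Rightarrow> nat \<Rightarrow> nat \<Rightarrow> bool" where
  "HS w t s e n \<longleftrightarrow> (\<exists>x. x 0 = s \<and> x n = e \<and> (\<forall>i<n. x i \<le> x (Suc i) \<and> t \<le> W w (x i) (x (Suc i))))"

definition AL :: "(nat \<Rightarrow> real) \<Rightarrow> (nat \<Rightarrow> real) \<Rightarrow> real \<Rightarrow> real \<Rightarrow> nat \<Rightarrow> nat \<Rightarrow> nat \<Rightarrow> nat \<Rightarrow> bool" where
  "AL wu wv tu tv s e k l \<longleftrightarrow> (\<exists>c \<tau>. c 0 = s \<and> c (k+l) = e \<and> card {i. i<k+l \<and> \<tau> i} = k \<and>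
     (\<forall>i<k+l. c i \<le> c (Suc i) \<and> (if \<tau> i then tu \<le> W wu (c i) (c (Suc i)) else tv \<le> W wv (c i) (c (Suc i)))))"

lemma W_split: "x \<le> y \<Longrightarrow> y \<le> z \<Longrightarrow> W w x z = W w x y + W w y z"
  unfolding W_def by (simp add: sum.atLeastLessThan_concat)

lemma W_nonneg: "\<forall>x. 0 \<le> w x \<Longrightarrow> 0 \<le> W w x y"
  unfolding W_def by (simp add: sum_nonneg)

lemma W_mono: assumes "\<forall>x. 0 \<le> w x" "x' \<le> x" "x \<le> y" "y \<le> y'" shows "W w x y \<le> W w x' y'"
proof -
  have "W w x' y' = W w x' x + W w x y + W w y y'"
    using assms W_split[of x' x y' w] W_split[of x y y' w] by simp
  moreover have "0 \<le> W w x' x" "0 \<le> W w y y'" using assms(1) W_nonneg by auto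
  ultimately show ?thesis by linarith
qed

lemma W_shift: assumes "\<forall>x. w (x + m) = w x" shows "W w (x + m) (y + m) = W w x y"
  unfolding W_def using assms sum.shift_bounds_nat_ivl[of w x m y] by simp

lemma chain_mono: "(\<forall>i<n. x i \<le> (x (Suc i) :: nat)) \<Longrightarrow> j \<le> j' \<Longrightarrow> j' \<le> n \<Longrightarrow> x j \<le> x j'"
proof (induction j')
  case 0 then show ?case by simp
next
  case (Suc j')
  show ?case
  proof (cases "j \<le> j'")
    case True
    then have "x j \<le> x j'" using Suc by simp
    moreover have "x j' \<le> x (Suc j')" using Suc.prems by simp
    ultimately show ?thesis by simp
  next
    case False
    then have "j = Suc j'" using Suc.prems by simp
    then show ?thesis by simp
  qed
qed

lemma HS_zero: "HS w t s s 0" unfolding HS_def by (rule exI[of _ "\<lambda>_. s"]) simp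

lemma HS_le: assumes "HS w t s e n" shows "s \<le> e"
proof -
  obtain x where "x 0 = s" "x n = e" "\<forall>i<n. x i \<le> x (Suc i)"
    using assms unfolding HS_def by blast
  then show ?thesis using chain_mono[of n x 0 n] by simp
qed

lemma HS_single: "s \<le> e \<Longrightarrow> t \<le> W w s e \<Longrightarrow> HS w t s e 1"
  unfolding HS_def by (rule exI[of _ "\<lambda>i. if i = 0 then s else e"]) simp

lemma HS_thr: "t' \<le> t \<Longrightarrow> HS w t s e n \<Longrightarrow> HS w t' s e n"
proof -
  assume "t' \<le> t" "HS w t s e n"
  then obtain x where "x 0 = s" "x n = e" "\<forall>i<n. x i \<le> x (Suc i) \<and> t \<le> W w (x i) (x (Suc i))"
    unfolding HS_def by blast
  then show ?thesis unfolding HS_def using \<open>t' \<le> t\<close> by (intro exI[of _ x]) force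
qed

lemma HS_concat: assumes "HS w t s x n1" "HS w t x e n2" shows "HS w t s e (n1 + n2)"
proof -
  obtain y1 where y1: "y1 0 = s" "y1 n1 = x" "\<forall>i<n1. y1 i \<le> y1 (Suc i) \<and> t \<le> W w (y1 i) (y1 (Suc i))"
    using assms(1) unfolding HS_def by blast
  obtain y2 where y2: "y2 0 = x" "y2 n2 = e" "\<forall>i<n2. y2 i \<le> y2 (Suc i) \<and> t \<le> W w (y2 i) (y2 (Suc i))"
    using assms(2) unfolding HS_def by blast
  define z where "z = (\<lambda>i. if i \<le> n1 then y1 i else y2 (i - n1))"
  have "\<forall>i<n1+n2. z i \<le> z (Suc i) \<and> t \<le> W w (z i) (z (Suc i))"
  proof (intro allI impI)
    fix i assume i: "i < n1 + n2"
    show "z i \<le> z (Suc i) \<and> t \<le> W w (z i) (z (Suc i))"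
    proof (cases "i < n1")
      case True then show ?thesis using y1 by (simp add: z_def)
    next
      case False
      then have "z i = y2 (i - n1)" "z (Suc i) = y2 (Suc (i - n1))"
        using y1(2) y2(1) by (auto simp: z_def Suc_diff_le)
      then show ?thesis using y2(3) i False by simp
    qed
  qed
  moreover have "z 0 = s" "z (n1+n2) = e" using y1 y2 by (auto simp: z_def)
  ultimately show ?thesis unfolding HS_def by blast
qed

lemma HS_extend: assumes "HS w t s e n" "n \<ge> 1" "\<forall>x. 0 \<le> w x" "s' \<le> s" "e \<le> e'"
  shows "HS w t s' e' n"
proof -
  obtain y where y: "y 0 = s" "y n = e" "\<forall>i<n. y i \<le> y (Suc i) \<and> t \<le> W w (y i) (y (Suc i))"
    using assms(1) unfolding HS_def by blast
  define z where "z = (\<lambda>i. if i = 0 then s' else if i = n then e' else y i)"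
  have "\<forall>i<n. z i \<le> z (Suc i) \<and> t \<le> W w (z i) (z (Suc i))"
  proof (intro allI impI)
    fix i assume i: "i < n"
    have a: "z i \<le> y i" using assms(4) y(1) i by (simp add: z_def)
    have b: "y (Suc i) \<le> z (Suc i)" using assms(5) y(2) by (simp add: z_def)
    have c: "y i \<le> y (Suc i)" "t \<le> W w (y i) (y (Suc i))" using y(3) i by auto
    have "W w (y i) (y (Suc i)) \<le> W w (z i) (z (Suc i))" using W_mono[OF assms(3) a c(1) b] .
    then show "z i \<le> z (Suc i) \<and> t \<le> W w (z i) (z (Suc i))"
      using a b c by linarith
  qed
  moreover have "z 0 = s'" "z n = e'" using assms(2) by (auto simp: z_def)
  ultimately show ?thesis unfolding HS_def by blast
qed

lemma HS_seq: assumes "\<forall>i. p i \<le> p (Suc i) \<and> t \<le> W w (p i) (p (Suc i))"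
  shows "HS w t (p i) (p (i + j)) j"
  unfolding HS_def using assms by (intro exI[of _ "\<lambda>r. p (i + r)"]) simp

lemma AL_allu: assumes "HS wu tu s e k" shows "AL wu wv tu tv s e k 0"
proof -
  obtain x where x: "x 0 = s" "x k = e" "\<forall>i<k. x i \<le> x (Suc i) \<and> tu \<le> W wu (x i) (x (Suc i))"
    using assms unfolding HS_def by blast
  have "card {i. i<k+0 \<and> True} = k" by simp
  then show ?thesis unfolding AL_def using x by (intro exI[of _ x] exI[of _ "\<lambda>_. True"]) simp
qed

lemma AL_allv: assumes "HS wv tv s e l" shows "AL wu wv tu tv s e 0 l"
proof -
  obtain x where x: "x 0 = s" "x l = e" "\<forall>i<l. x i \<le> x (Suc i) \<and> tv \<le> W wv (x i) (x (Suc i))"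
    using assms unfolding HS_def by blast
  show ?thesis unfolding AL_def using x by (intro exI[of _ x] exI[of _ "\<lambda>_. False"]) simp
qed

lemma AL_cons: assumes "s \<le> x" "AL wu wv tu tv x e k l"
  and "b \<Longrightarrow> tu \<le> W wu s x" "\<not> b \<Longrightarrow> tv \<le> W wv s x"
  shows "AL wu wv tu tv s e (if b then Suc k else k) (if b then l else Suc l)"
proof -
  obtain c \<tau> where c: "c 0 = x" "c (k+l) = e" "card {i. i<k+l \<and> \<tau> i} = k"
    "\<forall>i<k+l. c i \<le> c (Suc i) \<and> (if \<tau> i then tu \<le> W wu (c i) (c (Suc i)) else tv \<le> W wv (c i) (c (Suc i)))"
    using assms(2) unfolding AL_def by blast
  define c' where "c' = (\<lambda>i. if i = 0 then s else c (i - 1))"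
  define \<tau>' where "\<tau>' = (\<lambda>i. if i = 0 then b else \<tau> (i - 1))"
  let ?k = "if b then Suc k else k" and ?l = "if b then l else Suc l"
  have kl: "?k + ?l = Suc (k + l)" by simp
  have set: "{i. i < Suc (k+l) \<and> \<tau>' i} = (if b then insert 0 (Suc ` {i. i<k+l \<and> \<tau> i}) else Suc ` {i. i<k+l \<and> \<tau> i})"
  proof (rule set_eqI)
    fix z show "z \<in> {i. i < Suc (k+l) \<and> \<tau>' i} \<longleftrightarrow> z \<in> (if b then insert 0 (Suc ` {i. i<k+l \<and> \<tau> i}) else Suc ` {i. i<k+l \<and> \<tau> i})"
      by (cases z) (auto simp: \<tau>'_def)
  qed
  have card: "card {i. i < Suc (k+l) \<and> \<tau>' i} = ?k"
    unfolding set using c(3) by (simp add: card_image)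
  have "\<forall>i<Suc (k+l). c' i \<le> c' (Suc i) \<and> (if \<tau>' i then tu \<le> W wu (c' i) (c' (Suc i)) else tv \<le> W wv (c' i) (c' (Suc i)))"
  proof (intro allI impI)
    fix i assume i: "i < Suc (k+l)"
    show "c' i \<le> c' (Suc i) \<and> (if \<tau>' i then tu \<le> W wu (c' i) (c' (Suc i)) else tv \<le> W wv (c' i) (c' (Suc i)))"
    proof (cases i)
      case 0 then show ?thesis using assms c(1) by (auto simp: c'_def \<tau>'_def)
    next
      case (Suc j) then show ?thesis using c(4) i by (auto simp: c'_def \<tau>'_def)
    qed
  qed
  moreover have "c' 0 = s" "c' (Suc (k+l)) = e" using c by (auto simp: c'_def)
  ultimately show ?thesis unfolding AL_def kl using card by blast
qed

lemma HS_tail: assumes "HS w t s e (Suc n)"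
  obtains x where "s \<le> x" "t \<le> W w s x" "HS w t x e n"
proof -
  obtain y where y: "y 0 = s" "y (Suc n) = e" "\<forall>i<Suc n. y i \<le> y (Suc i) \<and> t \<le> W w (y i) (y (Suc i))"
    using assms unfolding HS_def by blast
  have "HS w t (y 1) e n" unfolding HS_def using y by (intro exI[of _ "\<lambda>i. y (Suc i)"]) auto
  moreover have "s \<le> y 1" "t \<le> W w s (y 1)" using y by auto
  ultimately show ?thesis using that by blast
qed

lemma PL:
  assumes "k + l = n" "HS wu tu s e n" "HS wv tv s e n" "\<forall>x. 0 \<le> wu x" "\<forall>x. 0 \<le> wv x"
  shows "AL wu wv tu tv s e k l"
  using assms
proof (induction n arbitrary: s k l)
  case 0 then show ?case using AL_allu by auto
next
  case (Suc n)
  show ?case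
  proof (cases "l = 0")
    case True then show ?thesis using Suc AL_allu by auto
  next
    case l: False
    show ?thesis
    proof (cases "k = 0")
      case True then show ?thesis using Suc AL_allv by auto
    next
      case k: False
      have n1: "n \<ge> 1" using k l Suc.prems(1) by simp
      obtain x where x: "s \<le> x" "tu \<le> W wu s x" "HS wu tu x e n" using HS_tail[OF Suc.prems(2)] by blast
      obtain y where y: "s \<le> y" "tv \<le> W wv s y" "HS wv tv y e n" using HS_tail[OF Suc.prems(3)] by blast
      show ?thesis
      proof (cases "x \<le> y")
        case True
        have "HS wv tv x e n" using HS_extend[OF y(3) n1 Suc.prems(5) True] by simp
        then have "AL wu wv tu tv x e (k - 1) l" using Suc.IH[of "k-1" l x] x(3) Suc.prems k by simp
        from AL_cons[OF x(1) this, of True] x(2) k show ?thesis by simp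
      next
        case False
        have "HS wu tu y e n" using HS_extend[OF x(3) n1 Suc.prems(4)] False by simp
        then have "AL wu wv tu tv y e k (l - 1)" using Suc.IH[of k "l-1" y] y(3) Suc.prems l by simp
        from AL_cons[OF y(1) this, of False] y(2) l show ?thesis by simp
      qed
    qed
  qed
qed

locale core =
  fixes m n k l :: nat and wu wv :: "nat \<Rightarrow> real" and a b :: real and p q :: "nat \<Rightarrow> nat"
  assumes kl: "k + l = n" and k1: "1 \<le> k" and l1: "1 \<le> l"
    and nnu: "\<forall>x. 0 \<le> wu x" and nnv: "\<forall>x. 0 \<le> wv x"
    and peru: "\<forall>x. wu (x + m) = wu x" and perv: "\<forall>x. wv (x + m) = wv x"
    and pmono: "\<forall>i. p i \<le> p (Suc i)" and pper: "\<forall>i. p (i + n) = p i + m" and pval: "\<forall>i. a \<le> W wu (p i) (p (Suc i))"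
    and qmono: "\<forall>i. q i \<le> q (Suc i)" and qper: "\<forall>i. q (i + n) = q i + m" and qval: "\<forall>i. b \<le> W wv (q i) (q (Suc i))"
    and a0: "0 \<le> a" and b0: "0 \<le> b"
begin

lemma n2: "2 \<le> n" using kl k1 l1 by simp

lemma HSp: "HS wu (3/4*a) (p i) (p (i + j)) j"
  using HS_thr[OF _ HS_seq[of p a wu i j]] pmono pval a0 by auto

lemma HSq: "HS wv (3/4*b) (q i) (q (i + j)) j"
  using HS_thr[OF _ HS_seq[of q b wv i j]] qmono qval b0 by auto

lemma ppm: "p (Suc i + (n - 1)) = p i + m"
proof -
  have "Suc i + (n - 1) = i + n" using n2 by simp
  then show ?thesis using pper by simp
qed
lemma qpm: "q (Suc i + (n - 1)) = q i + m"
proof -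
  have "Suc i + (n - 1) = i + n" using n2 by simp
  then show ?thesis using qper by simp
qed

lemma finish: "HS wu (3/4*a) s (s+m) n \<Longrightarrow> HS wv (3/4*b) s (s+m) n \<Longrightarrow> \<exists>s. AL wu wv (3/4*a) (3/4*b) s (s+m) k l"
  using PL[OF kl _ _ nnu nnv] by blast

lemma contP: assumes "q i \<le> p i" "p (Suc i) \<le> q (Suc i)"
  shows "\<exists>s. AL wu wv (3/4*a) (3/4*b) s (s+m) k l"
proof -
  have u: "HS wu (3/4*a) (p (Suc i)) (p i + m) (n - 1)" using HSp[of "Suc i" "n-1"] ppm by simp
  have v0: "HS wv (3/4*b) (q (Suc i)) (q i + m) (n - 1)" using HSq[of "Suc i" "n-1"] qpm by simp
  have v: "HS wv (3/4*b) (p (Suc i)) (p i + m) (n - 1)"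
    using HS_extend[OF v0 _ nnv assms(2)] n2 assms(1) by simp
  have "AL wu wv (3/4*a) (3/4*b) (p (Suc i)) (p i + m) (k - 1) l"
    using PL[OF _ u v nnu nnv] kl k1 by simp
  moreover have "3/4*a \<le> W wu (p i) (p (Suc i))" using pval a0 spec[OF pval, of i] by linarith
  ultimately have "AL wu wv (3/4*a) (3/4*b) (p i) (p i + m) (if True then Suc (k-1) else k-1) (if True then l else Suc l)"
    by (intro AL_cons) (use pmono in auto)
  then have "AL wu wv (3/4*a) (3/4*b) (p i) (p i + m) k l" using k1 by simp
  then show ?thesis by blast
qed

lemma contQ: assumes "p i \<le> q (Suc i)" "q (Suc (Suc i)) \<le> p (Suc i)"
  shows "\<exists>s. AL wu wv (3/4*a) (3/4*b) s (s+m) k l"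
proof -
  have v: "HS wv (3/4*b) (q (Suc (Suc i))) (q (Suc i) + m) (n - 1)" using HSq[of "Suc (Suc i)" "n-1"] qpm[of "Suc i"] by simp
  have u0: "HS wu (3/4*a) (p (Suc i)) (p i + m) (n - 1)" using HSp[of "Suc i" "n-1"] ppm by simp
  have u: "HS wu (3/4*a) (q (Suc (Suc i))) (q (Suc i) + m) (n - 1)"
    using HS_extend[OF u0 _ nnu assms(2)] n2 assms(1) by simp
  have "AL wu wv (3/4*a) (3/4*b) (q (Suc (Suc i))) (q (Suc i) + m) k (l - 1)"
    using PL[OF _ u v nnu nnv] kl l1 by simp
  moreover have "3/4*b \<le> W wv (q (Suc i)) (q (Suc (Suc i)))" using qval b0 spec[OF qval, of "Suc i"] by linarith
  ultimately have "AL wu wv (3/4*a) (3/4*b) (q (Suc i)) (q (Suc i) + m) (if False then Suc k else k) (if False then l-1 else Suc (l-1))"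
    by (intro AL_cons) (use qmono in auto)
  then have "AL wu wv (3/4*a) (3/4*b) (q (Suc i)) (q (Suc i) + m) k l" using l1 by simp
  then show ?thesis by blast
qed

end

lemma count_half:
  assumes "G \<subseteq> {..<n}" "\<forall>j<n. j \<notin> G \<longrightarrow> Suc j mod n \<in> G"
  shows "n \<le> 2 * card G"
proof -
  let ?f = "\<lambda>j. Suc j mod n"
  have inj: "inj_on ?f ({..<n} - G)"
  proof (rule inj_onI)
    fix x y assume "x \<in> {..<n} - G" "y \<in> {..<n} - G" "Suc x mod n = Suc y mod n"
    then show "x = y"
      by (cases "Suc x = n"; cases "Suc y = n") (auto simp: mod_if split: if_splits)
  qed
  have "?f ` ({..<n} - G) \<subseteq> G" using assms(2) by auto
  then have "card ({..<n} - G) \<le> card G"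
    using card_inj_on_le[OF inj] finite_subset[OF assms(1)] by blast
  moreover have "card ({..<n} - G) = n - card G"
    using assms(1) by (simp add: card_Diff_subset finite_subset)
  ultimately show ?thesis by linarith
qed

lemma AL_select:
  assumes "k + l = n" "\<forall>j<n. c j \<le> c (Suc j)" "c 0 = s" "c n = e" "S \<subseteq> {..<n}" "card S = k"
    "\<forall>j\<in>S. tu \<le> W wu (c j) (c (Suc j))" "\<forall>j<n. j \<notin> S \<longrightarrow> tv \<le> W wv (c j) (c (Suc j))"
  shows "AL wu wv tu tv s e k l"
proof -
  have "{i. i<k+l \<and> i \<in> S} = S" using assms(1,5) by auto
  then show ?thesis unfolding AL_def using assms
    by (intro exI[of _ c] exI[of _ "\<lambda>j. j \<in> S"]) auto
qed

context core begin

lemma interleave: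
  assumes "q 0 \<le> p 0" "p 0 < q 1"
    and noP: "\<forall>i. \<not>(q i \<le> p i \<and> p (Suc i) \<le> q (Suc i))"
    and noQ: "\<forall>i. \<not> (p i \<le> q (Suc i) \<and> q (Suc (Suc i)) \<le> p (Suc i))"
  shows "\<forall>i. q i \<le> p i \<and> p i < q (Suc i) \<and> q (Suc i) < p (Suc i)"
proof -
  have A: "q i \<le> p i \<and> p i < q (Suc i)" for i
  proof (induction i)
    case 0 then show ?case using assms by simp
  next
    case (Suc i)
    then have c: "q (Suc i) < p (Suc i)" using noP by force
    have "p i \<le> q (Suc i)" using Suc by simp
    then have "p (Suc i) < q (Suc (Suc i))" using noQ by force
    with c show ?case by simp
  qed
  show ?thesis using A noP by (metis not_le)
qed

lemma v1: assumes IL: "\<forall>i. q i \<le> p i \<and> p i < q (Suc i) \<and> q (Suc i) < p (Suc i)"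
  and big: "3/4*b \<le> W wv (p i) (q (Suc i))"
  shows "\<exists>s. AL wu wv (3/4*a) (3/4*b) s (s+m) k l"
proof -
  have u: "HS wu (3/4*a) (p i) (p i + m) n" using HSp[of i n, unfolded pper[rule_format]] by simp
  have v1: "HS wv (3/4*b) (p i) (q (Suc i)) 1" using HS_single[OF _ big] IL by (meson less_imp_le)
  have v2: "HS wv (3/4*b) (q (Suc i)) (p i + m) (n - 1)"
    using HS_extend[OF HSq[of "Suc i" "n-1"] _ nnv, of "q (Suc i)" "p i + m"] qpm[of i] IL n2 by simp
  have "HS wv (3/4*b) (p i) (p i + m) n" using HS_concat[OF v1 v2] n2 by simp
  then show ?thesis using finish u by blast
qed

lemma v2: assumes IL: "\<forall>i. q i \<le> p i \<and> p i < q (Suc i) \<and> q (Suc i) < p (Suc i)"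
  and big: "3/4*b \<le> W wv (q (Suc i)) (p (Suc i))"
  shows "\<exists>s. AL wu wv (3/4*a) (3/4*b) s (s+m) k l"
proof -
  have u: "HS wu (3/4*a) (p (Suc i)) (p (Suc i) + m) n" using HSp[of "Suc i" n, unfolded pper[rule_format]] by simp
  have v1: "HS wv (3/4*b) (p (Suc i)) (q (Suc i) + m) (n - 1)"
    using HS_extend[OF HSq[of "Suc (Suc i)" "n-1"] _ nnv, of "p (Suc i)" "q (Suc i) + m"] qpm[of "Suc i"] IL n2
    by (simp add: less_imp_le)
  have "W wv (q (Suc i) + m) (p (Suc i) + m) = W wv (q (Suc i)) (p (Suc i))" using W_shift[OF perv] .
  then have v2: "HS wv (3/4*b) (q (Suc i) + m) (p (Suc i) + m) 1" using HS_single big IL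
    by (metis add_le_cancel_right less_imp_le)
  have "HS wv (3/4*b) (p (Suc i)) (p (Suc i) + m) n" using HS_concat[OF v1 v2] n2 by simp
  then show ?thesis using finish u by blast
qed

lemma u1: assumes IL: "\<forall>i. q i \<le> p i \<and> p i < q (Suc i) \<and> q (Suc i) < p (Suc i)"
  and big: "3/4*a \<le> W wu (p i) (q (Suc i))"
  shows "\<exists>s. AL wu wv (3/4*a) (3/4*b) s (s+m) k l"
proof -
  have v: "HS wv (3/4*b) (q (Suc i)) (q (Suc i) + m) n" using HSq[of "Suc i" n, unfolded qper[rule_format]] by simp
  have u1: "HS wu (3/4*a) (q (Suc i)) (p i + m) (n - 1)"
    using HS_extend[OF HSp[of "Suc i" "n-1"] _ nnu, of "q (Suc i)" "p i + m"] ppm[of i] IL n2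
    by (simp add: less_imp_le)
  have "W wu (p i + m) (q (Suc i) + m) = W wu (p i) (q (Suc i))" using W_shift[OF peru] .
  then have u2: "HS wu (3/4*a) (p i + m) (q (Suc i) + m) 1" using HS_single big IL
    by (metis add_le_cancel_right less_imp_le)
  have "HS wu (3/4*a) (q (Suc i)) (q (Suc i) + m) n" using HS_concat[OF u1 u2] n2 by simp
  then show ?thesis using finish v by blast
qed

lemma u2: assumes IL: "\<forall>i. q i \<le> p i \<and> p i < q (Suc i) \<and> q (Suc i) < p (Suc i)"
  and big: "3/4*a \<le> W wu (q (Suc i)) (p (Suc i))"
  shows "\<exists>s. AL wu wv (3/4*a) (3/4*b) s (s+m) k l"
proof -
  have v: "HS wv (3/4*b) (q (Suc i)) (q (Suc i) + m) n" using HSq[of "Suc i" n, unfolded qper[rule_format]] by simp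
  have u1: "HS wu (3/4*a) (q (Suc i)) (p (Suc i)) 1" using HS_single[OF _ big] IL by (meson less_imp_le)
  have u2: "HS wu (3/4*a) (p (Suc i)) (q (Suc i) + m) (n - 1)"
    using HS_extend[OF HSp[of "Suc i" "n-1"] _ nnu, of "p (Suc i)" "q (Suc i) + m"] ppm[of i] IL n2
    by (simp add: less_imp_le)
  have "HS wu (3/4*a) (q (Suc i)) (q (Suc i) + m) n" using HS_concat[OF u1 u2] n2 by simp
  then show ?thesis using finish v by blast
qed

end

context core begin

lemma consec_u: assumes IL: "\<forall>i. q i \<le> p i \<and> p i < q (Suc i) \<and> q (Suc i) < p (Suc i)"
  and sm: "\<forall>i. W wu (p i) (q (Suc i)) < 3/4*a \<and> W wu (q (Suc i)) (p (Suc i)) < 3/4*a"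
  shows "3/4*a \<le> W wu (q (Suc i)) (q (Suc (Suc i))) \<or> 3/4*a \<le> W wu (q (Suc (Suc i))) (q (Suc (Suc (Suc i))))"
proof -
  define X where "X j = W wu (p j) (q (Suc j))" for j
  define Y where "Y j = W wu (q (Suc j)) (p (Suc j))" for j
  have P: "W wu (p j) (p (Suc j)) = X j + Y j" for j
    unfolding X_def Y_def using W_split IL by (meson less_imp_le)
  have Q: "W wu (q (Suc j)) (q (Suc (Suc j))) = Y j + X (Suc j)" for j
    unfolding X_def Y_def using W_split IL by (meson less_imp_le)
  have s: "X j < 3/4*a" "Y j < 3/4*a" for j using sm unfolding X_def Y_def by auto
  have "a \<le> X j + Y j" for j using pval P by metis
  from this[of i] this[of "Suc i"] this[of "Suc (Suc i)"] s[of i] s[of "Suc (Suc i)"] Q[of i] Q[of "Suc i"]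
  show ?thesis by linarith
qed

lemma consec_v: assumes IL: "\<forall>i. q i \<le> p i \<and> p i < q (Suc i) \<and> q (Suc i) < p (Suc i)"
  and sm: "\<forall>i. W wv (p i) (q (Suc i)) < 3/4*b \<and> W wv (q (Suc i)) (p (Suc i)) < 3/4*b"
  shows "3/4*b \<le> W wv (p (Suc i)) (p (Suc (Suc i))) \<or> 3/4*b \<le> W wv (p (Suc (Suc i))) (p (Suc (Suc (Suc i))))"
proof -
  define X where "X j = W wv (p j) (q (Suc j))" for j
  define Y where "Y j = W wv (q (Suc j)) (p (Suc j))" for j
  have P: "W wv (p j) (p (Suc j)) = X j + Y j" for j
    unfolding X_def Y_def using W_split IL by (meson less_imp_le)
  have Q: "W wv (q (Suc j)) (q (Suc (Suc j))) = Y j + X (Suc j)" for j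
    unfolding X_def Y_def using W_split IL by (meson less_imp_le)
  have s: "X j < 3/4*b" "Y j < 3/4*b" for j using sm unfolding X_def Y_def by auto
  have "b \<le> Y j + X (Suc j)" for j using qval Q by metis
  from this[of i] this[of "Suc i"] this[of "Suc (Suc i)"] s[of i] s[of "Suc (Suc (Suc i))"] P[of "Suc i"] P[of "Suc (Suc i)"]
  show ?thesis by linarith
qed

lemma count_case: assumes IL: "\<forall>i. q i \<le> p i \<and> p i < q (Suc i) \<and> q (Suc i) < p (Suc i)"
  and smu: "\<forall>i. W wu (p i) (q (Suc i)) < 3/4*a \<and> W wu (q (Suc i)) (p (Suc i)) < 3/4*a"
  and smv: "\<forall>i. W wv (p i) (q (Suc i)) < 3/4*b \<and> W wv (q (Suc i)) (p (Suc i)) < 3/4*b"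
  shows "\<exists>s. AL wu wv (3/4*a) (3/4*b) s (s+m) k l"
proof (cases "k \<le> l")
  case True
  define G where "G = {j. j < n \<and> 3/4*a \<le> W wu (q (Suc j)) (q (Suc (Suc j)))}"
  have per1: "W wu (q (Suc n)) (q (Suc (Suc n))) = W wu (q (Suc 0)) (q (Suc (Suc 0)))"
    using qper[rule_format, of 1] qper[rule_format, of "Suc (Suc 0)"] W_shift[OF peru, of "q 1" "q (Suc (Suc 0))"] by simp
  have "\<forall>j<n. j \<notin> G \<longrightarrow> Suc j mod n \<in> G"
  proof (intro allI impI)
    fix j assume j: "j < n" "j \<notin> G"
    then have c: "3/4*a \<le> W wu (q (Suc (Suc j))) (q (Suc (Suc (Suc j))))" using consec_u[OF IL smu, of j] G_def by auto
    show "Suc j mod n \<in> G"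
    proof (cases "Suc j = n")
      case True then show ?thesis using c per1 n2 by (auto simp: G_def)
    next
      case False then show ?thesis using c j by (auto simp: G_def)
    qed
  qed
  then have "n \<le> 2 * card G" using count_half[of G n] by (auto simp: G_def)
  then have "k \<le> card G" using True kl by linarith
  then obtain S where S: "S \<subseteq> G" "card S = k" using obtain_subset_with_card_n by metis
  have "AL wu wv (3/4*a) (3/4*b) (q (Suc 0)) (q (Suc n)) k l"
  proof (rule AL_select[OF kl, of "\<lambda>j. q (Suc j)"])
    show "S \<subseteq> {..<n}" using S by (auto simp: G_def)
    show "\<forall>j\<in>S. 3/4*a \<le> W wu (q (Suc j)) (q (Suc (Suc j)))" using S by (auto simp: G_def)
    show "\<forall>j<n. j \<notin> S \<longrightarrow> 3/4*b \<le> W wv (q (Suc j)) (q (Suc (Suc j)))"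
    proof (intro allI impI)
      fix j show "3/4*b \<le> W wv (q (Suc j)) (q (Suc (Suc j)))" using qval[rule_format, of "Suc j"] b0 by linarith
    qed
  qed (use qmono S in auto)
  moreover have "q (Suc n) = q (Suc 0) + m" using qper[rule_format, of 1] by simp
  ultimately show ?thesis by auto
next
  case False
  define G where "G = {j. j < n \<and> 3/4*b \<le> W wv (p (Suc j)) (p (Suc (Suc j)))}"
  have per1: "W wv (p (Suc n)) (p (Suc (Suc n))) = W wv (p (Suc 0)) (p (Suc (Suc 0)))"
    using pper[rule_format, of 1] pper[rule_format, of "Suc (Suc 0)"] W_shift[OF perv, of "p 1" "p (Suc (Suc 0))"] by simp
  have "\<forall>j<n. j \<notin> G \<longrightarrow> Suc j mod n \<in> G"
  proof (intro allI impI)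
    fix j assume j: "j < n" "j \<notin> G"
    then have c: "3/4*b \<le> W wv (p (Suc (Suc j))) (p (Suc (Suc (Suc j))))" using consec_v[OF IL smv, of j] G_def by auto
    show "Suc j mod n \<in> G"
    proof (cases "Suc j = n")
      case True then show ?thesis using c per1 n2 by (auto simp: G_def)
    next
      case False then show ?thesis using c j by (auto simp: G_def)
    qed
  qed
  then have "n \<le> 2 * card G" using count_half[of G n] by (auto simp: G_def)
  then have "l \<le> card G" using False kl by linarith
  then obtain S' where S': "S' \<subseteq> G" "card S' = l" using obtain_subset_with_card_n by metis
  have GS: "G \<subseteq> {..<n}" by (auto simp: G_def)
  have "AL wu wv (3/4*a) (3/4*b) (p (Suc 0)) (p (Suc n)) k l"
  proof (rule AL_select[OF kl, of "\<lambda>j. p (Suc j)" _ _ "{..<n} - S'"])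
    show "card ({..<n} - S') = k" using S' GS kl by (simp add: card_Diff_subset finite_subset)
    show "\<forall>j\<in>{..<n} - S'. 3/4*a \<le> W wu (p (Suc j)) (p (Suc (Suc j)))"
    proof
      fix j show "3/4*a \<le> W wu (p (Suc j)) (p (Suc (Suc j)))" using pval[rule_format, of "Suc j"] a0 by linarith
    qed
    show "\<forall>j<n. j \<notin> {..<n} - S' \<longrightarrow> 3/4*b \<le> W wv (p (Suc j)) (p (Suc (Suc j)))"
      using S' by (auto simp: G_def)
  qed (use pmono in auto)
  moreover have "p (Suc n) = p (Suc 0) + m" using pper[rule_format, of 1] by simp
  ultimately show ?thesis by auto
qed

end

context core begin
lemma core_norm: assumes "q 0 \<le> p 0" "p 0 < q 1"
  shows "\<exists>s. AL wu wv (3/4*a) (3/4*b) s (s+m) k l"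
proof (cases "\<exists>i. q i \<le> p i \<and> p (Suc i) \<le> q (Suc i)")
  case True then show ?thesis using contP by blast
next
  case nP: False
  show ?thesis
  proof (cases "\<exists>i. p i \<le> q (Suc i) \<and> q (Suc (Suc i)) \<le> p (Suc i)")
    case True then show ?thesis using contQ by blast
  next
    case nQ: False
    have IL: "\<forall>i. q i \<le> p i \<and> p i < q (Suc i) \<and> q (Suc i) < p (Suc i)"
      using interleave[OF assms] nP nQ by blast
    show ?thesis
    proof (cases "\<exists>i. 3/4*b \<le> W wv (p i) (q (Suc i)) \<or> 3/4*b \<le> W wv (q (Suc i)) (p (Suc i))
                     \<or> 3/4*a \<le> W wu (p i) (q (Suc i)) \<or> 3/4*a \<le> W wu (q (Suc i)) (p (Suc i))")
      case True then show ?thesis using v1[OF IL] v2[OF IL] u1[OF IL] u2[OF IL] by blast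
    next
      case False
      then show ?thesis using count_case[OF IL] by (meson not_le)
    qed
  qed
qed
end

lemma per_mult: assumes "\<forall>i. p (i + n) = (p i :: nat) + m" shows "p (i + n * t) = p i + t * m"
proof (induction t)
  case 0 then show ?case by simp
next
  case (Suc t)
  have "p (i + n * Suc t) = p ((i + n * t) + n)" by (simp add: algebra_simps)
  also have "\<dots> = p (i + n * t) + m" using assms by simp
  finally show ?case using Suc by simp
qed

theorem core_thm:
  fixes m n k l :: nat and wu wv :: "nat \<Rightarrow> real" and a b :: real and p q :: "nat \<Rightarrow> nat"
  assumes n1: "1 \<le> n" and m1: "1 \<le> m" and kl: "k + l = n"
    and nnu: "\<forall>x. 0 \<le> wu x" and nnv: "\<forall>x. 0 \<le> wv x"
    and peru: "\<forall>x. wu (x + m) = wu x" and perv: "\<forall>x. wv (x + m) = wv x"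
    and pmono: "\<forall>i. p i \<le> p (Suc i)" and pper: "\<forall>i. p (i + n) = p i + m" and pval: "\<forall>i. a \<le> W wu (p i) (p (Suc i))"
    and qmono: "\<forall>i. q i \<le> q (Suc i)" and qper: "\<forall>i. q (i + n) = q i + m" and qval: "\<forall>i. b \<le> W wv (q i) (q (Suc i))"
    and a0: "0 \<le> a" and b0: "0 \<le> b"
  shows "\<exists>s. AL wu wv (3/4*a) (3/4*b) s (s+m) k l"
proof -
  have HSp: "HS wu (3/4*a) (p 0) (p 0 + m) n"
    using HS_thr[OF _ HS_seq[of p a wu 0 n]] pmono pval a0 pper[rule_format, of 0] by auto
  have HSq: "HS wv (3/4*b) (q 0) (q 0 + m) n"
    using HS_thr[OF _ HS_seq[of q b wv 0 n]] qmono qval b0 qper[rule_format, of 0] by auto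
  show ?thesis
  proof (cases "k = 0")
    case True then show ?thesis using AL_allv[OF HSq] kl by auto
  next
    case k0: False
    show ?thesis
    proof (cases "l = 0")
      case True then show ?thesis using AL_allu[OF HSp] kl by auto
    next
      case l0: False
      define p' where "p' i = p (i + n * q 0)" for i
      have p'per: "\<forall>i. p' (i + n) = p' i + m"
      proof
        fix i have "p' (i + n) = p ((i + n * q 0) + n)" by (simp add: p'_def algebra_simps)
        then show "p' (i + n) = p' i + m" using pper by (simp add: p'_def)
      qed
      have p'0: "p' 0 = p 0 + q 0 * m" using per_mult[OF pper, of 0 "q 0"] by (simp add: p'_def)
      have qp: "q 0 \<le> p' 0" using p'0 m1 by (metis le_add2 le_trans mult_le_mono2 nat_mult_1_right mult.commute)
      have ex: "\<exists>j. p' 0 < q j"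
      proof -
        have "q (0 + n * (p' 0 + 1)) = q 0 + (p' 0 + 1) * m" using per_mult[OF qper] .
        moreover have "p' 0 + 1 \<le> (p' 0 + 1) * m" using m1 mult_le_mono2[OF m1, of "p' 0 + 1"] by simp
        ultimately have "p' 0 < q (0 + n * (p' 0 + 1))" by linarith
        then show ?thesis by blast
      qed
      define j1 where "j1 = (LEAST j. p' 0 < q j)"
      have j1: "p' 0 < q j1" using LeastI_ex[OF ex] unfolding j1_def .
      have j1n0: "j1 \<noteq> 0" using j1 qp by (metis leD)
      define d where "d = j1 - 1"
      have qd: "q d \<le> p' 0" using not_less_Least[of d "\<lambda>j. p' 0 < q j"] j1n0 unfolding d_def j1_def by linarith
      define q' where "q' i = q (i + d)" for i
      have q'1: "p' 0 < q' 1" using j1 j1n0 by (simp add: q'_def d_def)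
      interpret c: core m n k l wu wv a b p' q'
      proof
        show "\<forall>i. p' i \<le> p' (Suc i)" using pmono by (simp add: p'_def)
        show "\<forall>i. a \<le> W wu (p' i) (p' (Suc i))" using pval by (simp add: p'_def)
        show "\<forall>i. q' i \<le> q' (Suc i)" using qmono by (simp add: q'_def)
        show "\<forall>i. q' (i + n) = q' i + m"
        proof
          fix i have "q' (i + n) = q ((i + d) + n)" by (simp add: q'_def algebra_simps)
          then show "q' (i + n) = q' i + m" using qper by (simp add: q'_def)
        qed
        show "\<forall>i. b \<le> W wv (q' i) (q' (Suc i))" using qval by (simp add: q'_def)
      qed (use kl k0 l0 nnu nnv peru perv p'per a0 b0 in auto)
      show ?thesis using c.core_norm qd q'1 by (simp add: q'_def)
    qed
  qed
qed

definition arc :: "nat \<Rightarrow> nat \<Rightarrow> nat \<Rightarrow> nat set" where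
  "arc m x y = (\<lambda>i. i mod m) ` {x..<y}"

lemma win_inj: "inj_on (\<lambda>i. i mod m) {x..<x+(m::nat)}"
proof (rule inj_onI)
  fix i j assume ij: "i \<in> {x..<x+m}" "j \<in> {x..<x+m}" "i mod m = j mod m"
  show "i = j"
  proof (rule ccontr)
    assume ne: "i \<noteq> j"
    { fix i j :: nat assume ij: "i \<in> {x..<x+m}" "j \<in> {x..<x+m}" "i mod m = j mod m" "i < j"
      then have "m dvd j - i" using mod_eq_dvd_iff_nat[of i j m] by simp
      moreover have "0 < j - i" "j - i < m" using ij by auto
      ultimately have False using nat_dvd_not_less by blast }
    then show False using ij ne by (metis linorder_neqE_nat)
  qed
qed

lemma win_inj': "(x::nat) \<le> i \<Longrightarrow> x \<le> j \<Longrightarrow> i < x + m \<Longrightarrow> j < x + m \<Longrightarrow> i mod m = j mod m \<Longrightarrow> i = j"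
  using win_inj[of m x] unfolding inj_on_def by auto

lemma arc_sub: "0 < m \<Longrightarrow> arc m x y \<subseteq> {0..<m}"
  unfolding arc_def by auto

lemma arc_util: assumes "y \<le> x + m"
  shows "util u (arc m x y) = W (\<lambda>i. u (i mod m)) x y"
proof -
  have "inj_on (\<lambda>i. i mod m) {x..<y}" by (rule inj_on_subset[OF win_inj[of m x]]) (use assms in auto)
  then show ?thesis unfolding util_def arc_def W_def by (simp add: sum.reindex)
qed

lemma cycle_adj_sym: "cycle_adj m a b \<Longrightarrow> cycle_adj m b a"
  unfolding cycle_adj_def by auto

lemma arc_bundle: assumes m: "0 < m" shows "is_bundle m (arc m x y)"
proof -
  let ?S = "arc m x y"
  let ?R = "{(a, b). a \<in> ?S \<and> b \<in> ?S \<and> cycle_adj m a b}"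
  have symR: "sym ?R" unfolding sym_def using cycle_adj_sym by blast
  have fwd: "z < y \<Longrightarrow> x \<le> z \<Longrightarrow> (x mod m, z mod m) \<in> ?R\<^sup>*" for z
  proof (induction z)
    case 0 then show ?case by simp
  next
    case (Suc z)
    show ?case
    proof (cases "x \<le> z")
      case True
      then have IH: "(x mod m, z mod m) \<in> ?R\<^sup>*" using Suc by simp
      have "z mod m \<in> ?S" "Suc z mod m \<in> ?S" using True Suc.prems unfolding arc_def by auto
      moreover have "cycle_adj m (z mod m) (Suc z mod m)" unfolding cycle_adj_def using m by (simp add: mod_Suc_eq)
      ultimately have "(z mod m, Suc z mod m) \<in> ?R" by simp
      with IH show ?thesis by (rule rtrancl_into_rtrancl)
    next
      case False then have "x = Suc z" using Suc.prems by simp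
      then show ?thesis by simp
    qed
  qed
  have "(a, b) \<in> ?R\<^sup>*" if ha: "a \<in> ?S" and hb: "b \<in> ?S" for a b
  proof -
    obtain za where za: "a = za mod m" "za \<in> {x..<y}" using ha unfolding arc_def by blast
    obtain zb where zb: "b = zb mod m" "zb \<in> {x..<y}" using hb unfolding arc_def by blast
    note z = za zb
    have "(x mod m, a) \<in> ?R\<^sup>*" "(x mod m, b) \<in> ?R\<^sup>*" using fwd za zb by auto
    moreover have "(a, x mod m) \<in> ?R\<^sup>*" using calculation(1) sym_rtrancl[OF symR] unfolding sym_def by blast
    ultimately show ?thesis by (meson rtrancl_trans)
  qed
  then show ?thesis unfolding is_bundle_def using arc_sub[OF m] by blast
qed

lemma ivl_img: "{x..<x+L} = (\<lambda>j. x + j) ` {..<L::nat}"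
proof -
  have "plus x ` {0..<L} = {x+0..<x+L}" by (simp add: add.commute)
  then show ?thesis by (simp add: lessThan_atLeast0)
qed

lemma arc_img: "arc m x (x + L) = (\<lambda>j. (x + j) mod m) ` {..<L}"
  unfolding arc_def ivl_img image_image ..

lemma arc_shift: "arc m x (x + L) = arc m (x mod m) (x mod m + L)"
  unfolding arc_img by (simp add: mod_add_left_eq)

lemma find_ivl: "(\<forall>j<n. c j \<le> (c (Suc j)::nat)) \<Longrightarrow> c 0 \<le> i \<Longrightarrow> i < c n \<Longrightarrow> \<exists>j<n. c j \<le> i \<and> i < c (Suc j)"
proof (induction n)
  case 0 then show ?case by simp
next
  case (Suc n)
  show ?case
  proof (cases "i < c n")
    case True
    then obtain j where "j < n" "c j \<le> i \<and> i < c (Suc j)" using Suc by auto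
    then show ?thesis by (intro exI[of _ j]) auto
  next
    case False then show ?thesis using Suc.prems by (intro exI[of _ n]) auto
  qed
qed

lemma arcs_disj:
  assumes mono: "\<forall>j<n. c j \<le> c (Suc j)" and cn: "c n = c 0 + m"
    and j: "j < n" "j' < n" "j \<noteq> j'"
  shows "arc m (c j) (c (Suc j)) \<inter> arc m (c j') (c (Suc j')) = {}"
proof -
  have H: "arc m (c j) (c (Suc j)) \<inter> arc m (c j') (c (Suc j')) = {}" if j: "j < n" "j' < n" "j < j'" for j j'
    proof -
    show "arc m (c j) (c (Suc j)) \<inter> arc m (c j') (c (Suc j')) = {}"
    proof (rule ccontr)
      assume "arc m (c j) (c (Suc j)) \<inter> arc m (c j') (c (Suc j')) \<noteq> {}"
      then obtain z where z: "z \<in> arc m (c j) (c (Suc j))" "z \<in> arc m (c j') (c (Suc j'))" by blast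
      obtain y where y: "y \<in> {c j..<c (Suc j)}" "z = y mod m" using z(1) unfolding arc_def by blast
      obtain y' where y': "y' \<in> {c j'..<c (Suc j')}" "z = y' mod m" using z(2) unfolding arc_def by blast
      have yy: "y \<in> {c j..<c (Suc j)}" "y' \<in> {c j'..<c (Suc j')}" "y mod m = y' mod m" using y y' by auto
      have "c (Suc j) \<le> c j'" using chain_mono[OF mono, of "Suc j" j'] j by simp
      moreover have "c 0 \<le> c j" "c (Suc j') \<le> c n" using chain_mono[OF mono] j by auto
      ultimately have "y = y'" using yy cn by (intro win_inj'[of "c 0" y y' m]) auto
      then show False using yy \<open>c (Suc j) \<le> c j'\<close> by auto
    qed
    qed
  show ?thesis
  proof (cases "j < j'")
    case True then show ?thesis using j H by blast
  next
    case False then have "j' < j" using j by simp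
    then show ?thesis using j H[of j' j] by blast
  qed
qed

lemma arcs_cover:
  assumes m: "0 < m" and mono: "\<forall>j<n. c j \<le> c (Suc j)" and cn: "c n = c 0 + m" and g: "g < m"
  shows "\<exists>j<n. g \<in> arc m (c j) (c (Suc j))"
proof -
  define t where "t = c 0 div m"
  define r where "r = c 0 mod m"
  have c0: "c 0 = t * m + r" unfolding t_def r_def by simp
  have r: "r < m" using m unfolding r_def by simp
  define y where "y = (if r \<le> g then g + t * m else g + (t + 1) * m)"
  have gx: "(g + x * m) mod m = g" for x using g by simp
  have ymod: "y mod m = g" unfolding y_def using gx[of t] gx[of "t+1"] by presburger
  have "c 0 \<le> y" "y < c n" using c0 r g cn unfolding y_def by auto
  then obtain j where "j < n" "c j \<le> y" "y < c (Suc j)" using find_ivl[OF mono] by blast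
  then show ?thesis using ymod unfolding arc_def by (intro exI[of _ j]) auto
qed

lemma split_from:
  assumes m: "0 < m" and mono: "\<forall>j<n. c j \<le> c (Suc j)" and cn: "c n = c 0 + m"
    and \<sigma>: "bij_betw \<sigma> {..<n} {..<n}"
  shows "is_split m n (\<lambda>i. arc m (c (\<sigma> i)) (c (Suc (\<sigma> i))))"
  unfolding is_split_def
proof (intro conjI allI impI)
  show "is_bundle m (arc m (c (\<sigma> i)) (c (Suc (\<sigma> i))))" for i using arc_bundle[OF m] .
next
  fix i j assume "i < n" "j < n" "i \<noteq> j"
  then have "\<sigma> i < n" "\<sigma> j < n" "\<sigma> i \<noteq> \<sigma> j" using \<sigma> unfolding bij_betw_def inj_on_def by auto
  then show "arc m (c (\<sigma> i)) (c (Suc (\<sigma> i))) \<inter> arc m (c (\<sigma> j)) (c (Suc (\<sigma> j))) = {}"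
    using arcs_disj[OF mono cn] by blast
next
  show "(\<Union>i<n. arc m (c (\<sigma> i)) (c (Suc (\<sigma> i)))) = {0..<m}"
  proof
    show "(\<Union>i<n. arc m (c (\<sigma> i)) (c (Suc (\<sigma> i)))) \<subseteq> {0..<m}" using arc_sub[OF m] by blast
    show "{0..<m} \<subseteq> (\<Union>i<n. arc m (c (\<sigma> i)) (c (Suc (\<sigma> i))))"
    proof
      fix g assume "g \<in> {0..<m}"
      then obtain j where j: "j < n" "g \<in> arc m (c j) (c (Suc j))" using arcs_cover[OF m mono cn] by auto
      then obtain i where "i < n" "\<sigma> i = j" using \<sigma> unfolding bij_betw_def by (metis imageE lessThan_iff)
      then show "g \<in> (\<Union>i<n. arc m (c (\<sigma> i)) (c (Suc (\<sigma> i))))" using j by auto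
    qed
  qed
qed

lemma perm_exists:
  fixes n :: nat
  assumes "card {i. i < n \<and> ty i} = card {j. j < n \<and> \<tau> j}"
  shows "\<exists>\<sigma>. bij_betw \<sigma> {..<n} {..<n} \<and> (\<forall>i<n. \<tau> (\<sigma> i) = ty i)"
proof -
  let ?A = "{i. i < n \<and> ty i}" and ?B = "{j. j < n \<and> \<tau> j}"
  let ?A' = "{i. i < n \<and> \<not> ty i}" and ?B' = "{j. j < n \<and> \<not> \<tau> j}"
  have fA: "finite ?A" "finite ?A'" "finite ?B" "finite ?B'" by simp_all
  obtain f where f: "bij_betw f ?A ?B" using finite_same_card_bij[OF fA(1) fA(3) assms] by blast
  have "card ?A' = card ?B'"
  proof -
    have "card ?A' = n - card ?A"
    proof -
      have "?A' = {..<n} - ?A" by auto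
      then show ?thesis by (simp add: card_Diff_subset subset_eq)
    qed
    moreover have "card ?B' = n - card ?B"
    proof -
      have "?B' = {..<n} - ?B" by auto
      then show ?thesis by (simp add: card_Diff_subset subset_eq)
    qed
    ultimately show ?thesis using assms by simp
  qed
  then obtain g where g: "bij_betw g ?A' ?B'" using finite_same_card_bij[OF fA(2) fA(4)] by blast
  define \<sigma> where "\<sigma> i = (if ty i then f i else g i)" for i
  have "bij_betw \<sigma> ?A ?B" using f by (rule bij_betw_cong[THEN iffD1, rotated]) (simp add: \<sigma>_def)
  moreover have "bij_betw \<sigma> ?A' ?B'" using g by (rule bij_betw_cong[THEN iffD1, rotated]) (simp add: \<sigma>_def)
  ultimately have "bij_betw \<sigma> (?A \<union> ?A') (?B \<union> ?B')" by (rule bij_betw_combine) auto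
  moreover have "?A \<union> ?A' = {..<n}" "?B \<union> ?B' = {..<n}" by auto
  ultimately have b: "bij_betw \<sigma> {..<n} {..<n}" by simp
  have "\<tau> (\<sigma> i) = ty i" if "i < n" for i
  proof (cases "ty i")
    case True then have "\<sigma> i \<in> ?B" using f that unfolding bij_betw_def \<sigma>_def by auto
    then show ?thesis using True by simp
  next
    case False then have "\<sigma> i \<in> ?B'" using g that unfolding bij_betw_def \<sigma>_def by auto
    then show ?thesis using False by simp
  qed
  then show ?thesis using b by blast
qed

lemma util_cong: "S \<subseteq> {0..<m} \<Longrightarrow> \<forall>g<m. u g = u' g \<Longrightarrow> util u S = util u' S"
  unfolding util_def by (intro sum.cong) auto

lemma split_sub: "is_split m n P \<Longrightarrow> i < n \<Longrightarrow> P i \<subseteq> {0..<m}"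
  unfolding is_split_def is_bundle_def by blast

lemma mms_cong: assumes "\<forall>g<m. u g = u' g" shows "mms m n u = mms m n u'"
proof -
  have "(MIN i\<in>{0..<n}. util u (P i)) = (MIN i\<in>{0..<n}. util u' (P i))" if "is_split m n P" for P
  proof -
    have "(\<lambda>i. util u (P i)) ` {0..<n} = (\<lambda>i. util u' (P i)) ` {0..<n}"
      using util_cong[OF split_sub[OF that] assms] by (intro image_cong) auto
    then show ?thesis by simp
  qed
  then show ?thesis unfolding mms_def by (intro SUP_cong) auto
qed

lemma full_bundle: "0 < m \<Longrightarrow> is_bundle m {0..<m}"
  using arc_bundle[of m 0 m] unfolding arc_def by (simp add: image_cong)

lemma mms_attained: assumes m: "0 < m" and n: "1 \<le> n"
  shows "\<exists>P. is_split m n P \<and> (MIN i\<in>{0..<n}. util u (P i)) = mms m n u"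
proof -
  define f where "f P = (MIN i\<in>{0..<n}. util u (P i))" for P :: "nat \<Rightarrow> nat set"
  let ?X = "f ` {P. is_split m n P}"
  have sub: "?X \<subseteq> f ` ({0..<n} \<rightarrow>\<^sub>E Pow {0..<m})"
  proof
    fix v assume "v \<in> ?X"
    then obtain P where P: "is_split m n P" "v = f P" by auto
    have "restrict P {0..<n} \<in> {0..<n} \<rightarrow>\<^sub>E Pow {0..<m}" using split_sub[OF P(1)] by auto
    moreover have "f (restrict P {0..<n}) = f P" unfolding f_def
      by (intro arg_cong[where f=Min] image_cong) auto
    ultimately show "v \<in> f ` ({0..<n} \<rightarrow>\<^sub>E Pow {0..<m})" unfolding P(2) by (metis image_eqI)
  qed
  have fin: "finite ?X" by (rule finite_subset[OF sub]) (simp add: finite_PiE)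
  define P0 where "P0 i = (if i = 0 then {0..<m} else {})" for i :: nat
  have "is_split m n P0"
    unfolding is_split_def
  proof (intro conjI allI impI)
    show "is_bundle m (P0 i)" for i
      using full_bundle[OF m] by (simp add: P0_def is_bundle_def)
    show "P0 i \<inter> P0 j = {}" if "i \<noteq> j" for i j using that by (simp add: P0_def)
    show "(\<Union>i<n. P0 i) = {0..<m}" using n by (auto simp: P0_def)
  qed
  then have ne: "?X \<noteq> {}" by blast
  have "mms m n u = Sup ?X" unfolding mms_def f_def by simp
  also have "\<dots> = Max ?X" using cSup_eq_Max[OF fin ne] .
  finally have "mms m n u \<in> ?X" using Max_in[OF fin ne] by simp
  then show ?thesis unfolding f_def by auto
qed

lemma W_shift_mult: assumes "\<forall>x. w (x + m) = w x" shows "W w (x + t * m) (y + t * m) = W w x y"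
proof (induction t)
  case 0 then show ?case by simp
next
  case (Suc t)
  have "W w (x + Suc t * m) (y + Suc t * m) = W w ((x + t * m) + m) ((y + t * m) + m)" by (simp add: algebra_simps)
  also have "\<dots> = W w (x + t * m) (y + t * m)" using W_shift[OF assms] .
  finally show ?case using Suc by simp
qed

lemma periodic_ext:
  assumes n: "1 \<le> n" and mono: "\<forall>j<n. c j \<le> c (Suc j)" and cn: "c n = c 0 + m"
    and val: "\<forall>j<n. a \<le> W w (c j) (c (Suc j))" and per: "\<forall>x. w (x + m) = w x"
  shows "\<exists>p. (\<forall>i. p i \<le> p (Suc i)) \<and> (\<forall>i. p (i+n) = p i + m) \<and> (\<forall>i. a \<le> W w (p i) (p (Suc i)))"
proof -
  define p where "p i = c (i mod n) + (i div n) * m" for i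
  have ps: "p (Suc i) = c (Suc (i mod n)) + (i div n) * m" for i
  proof (cases "Suc (i mod n) = n")
    case True
    then have "Suc i mod n = 0" "Suc i div n = Suc (i div n)" by (simp_all add: mod_Suc div_Suc)
    then show ?thesis using True cn by (simp add: p_def)
  next
    case False
    then have "Suc i mod n = Suc (i mod n)" "Suc i div n = i div n" by (simp_all add: mod_Suc div_Suc)
    then show ?thesis by (simp add: p_def)
  qed
  have lt: "i mod n < n" for i using n by simp
  have "\<forall>i. p i \<le> p (Suc i)" using ps mono lt unfolding p_def by (metis add_le_mono1)
  moreover have "\<forall>i. p (i+n) = p i + m" unfolding p_def using n by (simp add: algebra_simps)
  moreover have "\<forall>i. a \<le> W w (p i) (p (Suc i))"
  proof
    fix i
    have "W w (p i) (p (Suc i)) = W w (c (i mod n)) (c (Suc (i mod n)))"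
      unfolding ps by (simp add: p_def W_shift_mult[OF per])
    then show "a \<le> W w (p i) (p (Suc i))" using val lt by simp
  qed
  ultimately show ?thesis by blast
qed

lemma bundle_arc:
  assumes m: "0 < m" and b: "is_bundle m S" and ne: "S \<noteq> {}" and nf: "S \<noteq> {0..<m}"
  shows "\<exists>s. S = arc m s (s + card S) \<and> card S < m"
proof -
  have Ssub: "S \<subseteq> {0..<m}" using b unfolding is_bundle_def by blast
  have "\<not> {0..<m} \<subseteq> S" using Ssub nf by blast
  then obtain g where g0: "g \<in> {0..<m}" "g \<notin> S" by blast
  then have g: "g < m" "g \<notin> S" by auto
  define \<phi> where "\<phi> j = (Suc g + j) mod m" for j
  have inj: "inj_on \<phi> {..<m}"
  proof (rule inj_onI)
    fix x y assume "x \<in> {..<m}" "y \<in> {..<m}" "\<phi> x = \<phi> y"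
    then have "Suc g + x = Suc g + y" using win_inj'[of "Suc g" "Suc g + x" "Suc g + y" m] unfolding \<phi>_def by auto
    then show "x = y" by simp
  qed
  have img: "\<phi> ` {..<m} = {0..<m}"
  proof (rule card_subset_eq)
    show "\<phi> ` {..<m} \<subseteq> {0..<m}" using m unfolding \<phi>_def by auto
    show "card (\<phi> ` {..<m}) = card {0..<m}" using card_image[OF inj] by simp
  qed simp
  have phig: "\<phi> (m - 1) = g" using m g unfolding \<phi>_def by simp
  define T where "T = {j. j < m \<and> \<phi> j \<in> S}"
  have ST: "S = \<phi> ` T"
  proof
    show "\<phi> ` T \<subseteq> S" unfolding T_def by auto
    show "S \<subseteq> \<phi> ` T"
    proof
      fix x assume x: "x \<in> S"
      then have "x \<in> \<phi> ` {..<m}" using img Ssub by auto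
      then obtain j where "j < m" "x = \<phi> j" by auto
      then show "x \<in> \<phi> ` T" using x unfolding T_def by auto
    qed
  qed
  have Tsub: "T \<subseteq> {..<m-1}"
  proof
    fix j assume j: "j \<in> T"
    then have "j \<noteq> m - 1" using phig g unfolding T_def by auto
    then show "j \<in> {..<m-1}" using j unfolding T_def by auto
  qed
  have sucphi: "Suc (\<phi> j) mod m = \<phi> (Suc j)" for j unfolding \<phi>_def by (simp add: mod_Suc_eq)
  have adj: "j' = Suc j \<or> j = Suc j'" if "j \<in> T" "j' \<in> T" "cycle_adj m (\<phi> j) (\<phi> j')" for j j'
  proof -
    have jm: "Suc j < m" "Suc j' < m" using that(1,2) Tsub by auto
    have jm': "j < m" "j' < m" using jm by auto
    from that(3) have "\<phi> j' = \<phi> (Suc j) \<or> \<phi> j = \<phi> (Suc j')" unfolding cycle_adj_def sucphi by simp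
    then show ?thesis using inj jm jm' unfolding inj_on_def by blast
  qed
  let ?R = "{(x, y). x \<in> S \<and> y \<in> S \<and> cycle_adj m x y}"
  have conv: "j2 \<in> T" if j: "j1 \<in> T" "j3 \<in> T" "j1 < j2" "j2 < j3" for j1 j2 j3
  proof (rule ccontr)
    assume nj2: "j2 \<notin> T"
    have path: "(\<phi> j1, \<phi> j3) \<in> ?R\<^sup>*" using b j(1,2) unfolding is_bundle_def T_def by blast
    have "\<exists>j<j2. j \<in> T \<and> \<phi> j = z" if "(\<phi> j1, z) \<in> ?R\<^sup>*" for z
      using that
    proof (induction rule: rtrancl_induct)
      case base then show ?case using j by blast
    next
      case (step y z)
      then obtain j where jj: "j < j2" "j \<in> T" "\<phi> j = y" by blast
      have "z \<in> S" "cycle_adj m y z" using step by auto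
      then have "z \<in> \<phi> ` {..<m}" using img Ssub by auto
      then obtain j' where j': "j' < m" "\<phi> j' = z" by auto
      then have j'T: "j' \<in> T" using \<open>z \<in> S\<close> unfolding T_def by auto
      have "j' = Suc j \<or> j = Suc j'" using adj[OF jj(2) j'T] jj(3) j'(2) \<open>cycle_adj m y z\<close> by simp
      moreover have "j' \<noteq> j2" using j'T nj2 by auto
      ultimately have "j' < j2" using jj(1) by linarith
      then show ?case using j'T j' by blast
    qed
    from this[OF path] obtain j where "j < j2" "j \<in> T" "\<phi> j = \<phi> j3" by blast
    then have "j = j3" using inj j(2) unfolding inj_on_def T_def by auto
    then show False using \<open>j < j2\<close> j by simp
  qed
  have Tne: "T \<noteq> {}" using ST ne by auto
  have Tfin: "finite T" unfolding T_def by simp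
  define lo where "lo = Min T"
  define hi where "hi = Max T"
  have "T = {lo..hi}"
  proof
    show "T \<subseteq> {lo..hi}" unfolding lo_def hi_def using Tfin by auto
    show "{lo..hi} \<subseteq> T"
    proof
      fix j assume "j \<in> {lo..hi}"
      moreover have "lo \<in> T" "hi \<in> T" unfolding lo_def hi_def using Tfin Tne by auto
      ultimately show "j \<in> T" using conv by (metis atLeastAtMost_iff le_neq_implies_less)
    qed
  qed
  then have T: "T = {lo..<lo + card T}"
  proof -
    assume TT: "T = {lo..hi}"
    then have "lo \<le> hi" using Tne by auto
    moreover have "card T = Suc hi - lo" using TT by simp
    ultimately have "lo + card T = Suc hi" by simp
    then show ?thesis using TT atLeastLessThanSuc_atLeastAtMost by simp
  qed
  have "T \<subseteq> {..<m}" using Tsub by auto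
  then have cardS: "card S = card T" unfolding ST by (intro card_image inj_on_subset[OF inj])
  have "card T < m" using card_mono[OF _ Tsub] m by simp
  then have B: "card S < m" using cardS by simp
  have A: "S = arc m (Suc g + lo) (Suc g + lo + card S)"
  proof -
    have "S = \<phi> ` {lo..<lo + card T}" using ST T by simp
    also have "\<dots> = (\<lambda>j. (Suc g + lo + j) mod m) ` {..<card T}"
      unfolding ivl_img image_image \<phi>_def by (simp add: add.assoc)
    also have "\<dots> = arc m (Suc g + lo) (Suc g + lo + card S)" unfolding arc_img cardS ..
    finally show ?thesis .
  qed
  show ?thesis by (rule exI[of _ "Suc g + lo"]) (rule conjI[OF A B])
qed

lemma arc_start:
  assumes m: "0 < m" and S: "S = arc m s (s + L)" and x: "x mod m \<in> S" and x': "(x + m - 1) mod m \<notin> S"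
  shows "S = arc m x (x + L)"
proof -
  obtain j where j: "j < L" "x mod m = (s + j) mod m" using x unfolding S arc_img by auto
  show ?thesis
  proof (cases j)
    case 0
    then have "x mod m = s mod m" using j by simp
    then show ?thesis unfolding S using arc_shift[of m x L] arc_shift[of m s L] by simp
  next
    case (Suc j')
    have "(x + m - 1) mod m = (x + (m - 1)) mod m" using m by simp
    also have "\<dots> = (x mod m + (m - 1)) mod m" by (simp add: mod_add_left_eq)
    also have "\<dots> = ((s + j) mod m + (m - 1)) mod m" using j by simp
    also have "\<dots> = (s + j + (m - 1)) mod m" by (simp add: mod_add_left_eq)
    also have "\<dots> = ((s + j') + m) mod m" using Suc m by simp
    also have "\<dots> = (s + j') mod m" by simp
    finally have "(x + m - 1) mod m \<in> S" unfolding S arc_img using Suc j by auto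
    then show ?thesis using x' by simp
  qed
qed

primrec walk :: "(nat \<Rightarrow> nat) \<Rightarrow> nat \<Rightarrow> nat \<Rightarrow> nat \<Rightarrow> nat" where
  "walk f bnd x0 0 = x0"
| "walk f bnd x0 (Suc t) = (if walk f bnd x0 t < bnd then walk f bnd x0 t + f (walk f bnd x0 t) else walk f bnd x0 t)"

lemma split_bounds:
  assumes m: "0 < m" and n: "1 \<le> n" and P: "is_split m n P" and val: "\<forall>i<n. a \<le> util u (P i)"
  shows "\<exists>c. (\<forall>j<n. c j \<le> c (Suc j)) \<and> c n = c 0 + m \<and> (\<forall>j<n. a \<le> W (\<lambda>x. u (x mod m)) (c j) (c (Suc j)))"
proof -
  let ?w = "\<lambda>x. u (x mod m)"
  have bund: "\<And>i. i < n \<Longrightarrow> is_bundle m (P i)" using P unfolding is_split_def by blast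
  have disj: "\<And>i j. i < n \<Longrightarrow> j < n \<Longrightarrow> i \<noteq> j \<Longrightarrow> P i \<inter> P j = {}" using P unfolding is_split_def by blast
  have cov: "(\<Union>i<n. P i) = {0..<m}" using P unfolding is_split_def by blast
  have sub: "\<And>i. i < n \<Longrightarrow> P i \<subseteq> {0..<m}" using split_sub[OF P] .
  have own_ex: "\<exists>i<n. g \<in> P i" if "g < m" for g using cov that by auto
  have uniq: "i = j" if "i < n" "j < n" "g \<in> P i" "g \<in> P j" for i j g using disj that by blast
  show ?thesis
  proof (cases "\<exists>i0<n. P i0 = {0..<m}")
    case True
    then obtain i0 where i0: "i0 < n" "P i0 = {0..<m}" by blast
    define c where "c j = (if j = 0 then 0 else m)" for j :: nat
    have "\<forall>j<n. a \<le> W ?w (c j) (c (Suc j))"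
    proof (intro allI impI)
      fix j assume j: "j < n"
      show "a \<le> W ?w (c j) (c (Suc j))"
      proof (cases "j = 0")
        case True
        have "arc m 0 m = {0..<m}" unfolding arc_def by (simp add: image_cong)
        then have "W ?w 0 m = util u (P i0)" using arc_util[of m 0 m u] i0 by simp
        moreover have "a \<le> util u (P i0)" using val i0(1) by blast
        ultimately show ?thesis using True by (simp add: c_def)
      next
        case False
        define i :: nat where "i = (if i0 = 0 then 1 else 0)"
        have "i < n" "i \<noteq> i0" using j False i0 by (auto simp: i_def)
        then have "P i = {}" using disj[of i i0] sub[of i] i0 by auto
        then have "a \<le> 0" using val \<open>i < n\<close> unfolding util_def by force
        then show ?thesis using False by (simp add: c_def W_def)
      qed
    qed
    moreover have "c n = c 0 + m" using n by (simp add: c_def)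
    moreover have "\<forall>j<n. c j \<le> c (Suc j)" by (simp add: c_def)
    ultimately show ?thesis by blast
  next
    case False
    then have nf: "\<And>i. i < n \<Longrightarrow> P i \<noteq> {0..<m}" by blast
    have step: "P i = arc m x (x + card (P i)) \<and> 1 \<le> card (P i) \<and> card (P i) < m"
      if i: "i < n" and x: "x mod m \<in> P i" and x': "(x + m - 1) mod m \<notin> P i" for i x
    proof -
      have ne: "P i \<noteq> {}" using x by auto
      obtain s where s: "P i = arc m s (s + card (P i))" "card (P i) < m"
        using bundle_arc[OF m bund[OF i] ne nf[OF i]] by blast
      have "finite (P i)" using sub[OF i] finite_subset by blast
      then have "1 \<le> card (P i)" using ne by (simp add: Suc_le_eq card_gt_0_iff)
      then show ?thesis using arc_start[OF m s(1) x x'] s(2) by blast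
    qed
    obtain i0 where i0: "i0 < n" "0 \<in> P i0" using own_ex[of 0] m by blast
    have ne0: "P i0 \<noteq> {}" using i0 by auto
    define L0 where "L0 = card (P i0)"
    obtain s0 where s0: "P i0 = arc m s0 (s0 + L0)" "L0 < m"
      using bundle_arc[OF m bund[OF i0(1)] ne0 nf[OF i0(1)]] unfolding L0_def by blast
    have "finite (P i0)" using sub[OF i0(1)] finite_subset by blast
    then have L0: "1 \<le> L0" using ne0 unfolding L0_def by (simp add: Suc_le_eq card_gt_0_iff)
    have "s0 \<in> {s0..<s0+L0}" using L0 by simp
    then have "s0 mod m \<in> arc m s0 (s0 + L0)" unfolding arc_def by (rule imageI)
    then have s0in: "s0 mod m \<in> P i0" using s0(1) by simp
    have s0start: "(s0 + m - 1) mod m \<notin> P i0"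
    proof
      assume "(s0 + m - 1) mod m \<in> P i0"
      then have "(s0 + m - 1) mod m \<in> (\<lambda>i. i mod m) ` {s0..<s0 + L0}" using s0(1) unfolding arc_def by simp
      then obtain y where y: "y \<in> {s0..<s0 + L0}" "(s0 + m - 1) mod m = y mod m" by (rule imageE) auto
      have y1: "s0 \<le> y" "y < s0 + L0" using y(1) by auto
      have "s0 + m - 1 = y"
        by (rule win_inj'[of s0 _ _ m]) (use m y1 s0(2) y(2) in linarith)+
      then show False using y1 s0(2) by linarith
    qed
    define own where "own x = (SOME i. i < n \<and> x mod m \<in> P i)" for x
    have own: "own x < n \<and> x mod m \<in> P (own x)" for x
    proof -
      have "\<exists>i. i < n \<and> x mod m \<in> P i" using own_ex[of "x mod m"] m by auto
      then show ?thesis unfolding own_def by (rule someI_ex)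
    qed
    define L where "L x = card (P (own x))" for x
    define pos where "pos = walk L (s0 + m) s0"
    have pos0: "pos 0 = s0" by (simp add: pos_def)
    have posS: "pos (Suc t) = (if pos t < s0 + m then pos t + L (pos t) else pos t)" for t by (simp add: pos_def)
    define start where "start x \<longleftrightarrow> (x + m - 1) mod m \<notin> P (own x)" for x
    have arcpos: "P (own x) = arc m x (x + L x) \<and> 1 \<le> L x \<and> L x < m" if "start x" for x
      using step[of "own x" x] own[of x] that unfolding start_def L_def by blast
    have INV: "s0 \<le> pos t \<and> pos t \<le> s0 + m \<and> (pos t < s0 + m \<longrightarrow> start (pos t))" for t
    proof (induction t)
      case 0
      have "own s0 = i0" using uniq[OF _ i0(1) _ s0in] own[of s0] by blast
      then show ?case using pos0 s0start unfolding start_def by simp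
    next
      case (Suc t)
      show ?case
      proof (cases "pos t < s0 + m")
        case False then show ?thesis using Suc posS[of t] by simp
      next
        case True
        let ?x = "pos t"
        have st: "start ?x" using Suc True by simp
        note A = arcpos[OF st]
        have ps: "pos (Suc t) = ?x + L ?x" using posS[of t] True by simp
        have a: "?x + L ?x \<le> s0 + m"
        proof (rule ccontr)
          assume "\<not> ?x + L ?x \<le> s0 + m"
          then have i1: "s0 + m \<in> {?x..<?x + L ?x}" "s0 + m - 1 \<in> {?x..<?x + L ?x}" using True m by auto
          have "(s0 + m) mod m \<in> arc m ?x (?x + L ?x)" unfolding arc_def using i1(1) by (rule imageI)
          moreover have "(s0 + m - 1) mod m \<in> arc m ?x (?x + L ?x)" unfolding arc_def using i1(2) by (rule imageI)
          ultimately have "(s0 + m) mod m \<in> P (own ?x)" "(s0 + m - 1) mod m \<in> P (own ?x)" using A by simp_all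
          then have "s0 mod m \<in> P (own ?x)" by simp
          then have "own ?x = i0" using uniq[OF _ i0(1) _ s0in] own[of ?x] by blast
          then show False using \<open>(s0 + m - 1) mod m \<in> P (own ?x)\<close> s0start by simp
        qed
        have b: "start (?x + L ?x)" if "?x + L ?x < s0 + m"
        proof -
          let ?z = "?x + L ?x"
          have "?z + m - 1 = (?x + L ?x - 1) + m" using A by simp
          then have zm: "(?z + m - 1) mod m = (?x + L ?x - 1) mod m" by simp
          have "?x + L ?x - 1 \<in> {?x..<?x + L ?x}" using A by auto
          then have "(?x + L ?x - 1) mod m \<in> arc m ?x (?x + L ?x)" unfolding arc_def by (rule imageI)
          then have "(?x + L ?x - 1) mod m \<in> P (own ?x)" using A by simp
          then have in1: "(?z + m - 1) mod m \<in> P (own ?x)" using zm by simp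
          have "?z mod m \<notin> P (own ?x)"
          proof
            assume "?z mod m \<in> P (own ?x)"
            then have "?z mod m \<in> (\<lambda>i. i mod m) ` {?x..<?z}" using A unfolding arc_def by simp
            then obtain y where y: "y \<in> {?x..<?z}" "?z mod m = y mod m" by (rule imageE) auto
            have y1: "?x \<le> y" "y < ?z" using y(1) by auto
            have "?z = y" by (rule win_inj'[of ?x _ _ m]) (use A y1 y(2) in linarith)+
            then show False using y1 by linarith
          qed
          then have "own ?z \<noteq> own ?x" using own[of ?z] by auto
          then have "(?z + m - 1) mod m \<notin> P (own ?z)" using disj[of "own ?z" "own ?x"] own in1 by blast
          then show ?thesis unfolding start_def .
        qed
        show ?thesis using a b ps Suc by auto
      qed
    qed
    have mono1: "pos t \<le> pos (Suc t)" for t using posS[of t] by simp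
    have monoall: "pos t \<le> pos t'" if "t \<le> t'" for t t'
      using chain_mono[of t' pos t t'] mono1 that by simp
    have dist: "own (pos t) \<noteq> own (pos t')" if tt: "t < t'" "pos t' < s0 + m" for t t'
    proof
      assume eq: "own (pos t) = own (pos t')"
      have lt: "pos t < s0 + m" using monoall[of t t'] tt by simp
      have I: "s0 \<le> pos t" "start (pos t)" using INV[of t] lt by auto
      note A = arcpos[OF I(2)]
      have "pos (Suc t) = pos t + L (pos t)" using posS[of t] lt by simp
      then have ge: "pos t + L (pos t) \<le> pos t'" using monoall[of "Suc t" t'] tt by simp
      have "pos t' mod m \<in> P (own (pos t'))" using own[of "pos t'"] by blast
      then have "pos t' mod m \<in> P (own (pos t))" using eq by simp
      then have "pos t' mod m \<in> (\<lambda>i. i mod m) ` {pos t..<pos t + L (pos t)}" using A unfolding arc_def by simp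
      then obtain y where y: "y \<in> {pos t..<pos t + L (pos t)}" "pos t' mod m = y mod m" by (rule imageE) auto
      have y1: "pos t \<le> y" "y < pos t + L (pos t)" using y(1) by auto
      have Lm: "L (pos t) < m" using A by blast
      have c1: "pos t \<le> pos t'" using ge by linarith
      have c2: "pos t' < pos t + m" using I(1) tt(2) by linarith
      have c3: "y < pos t + m" using y1 Lm by linarith
      have "pos t' = y" using win_inj'[OF c1 y1(1) c2 c3 y(2)] .
      then show False using y1 ge by linarith
    qed
    have termi: "pos n = s0 + m"
    proof (rule ccontr)
      assume "pos n \<noteq> s0 + m"
      then have "pos n < s0 + m" using INV[of n] by simp
      then have allt: "pos t < s0 + m" if "t \<le> n" for t using monoall[OF that] by simp
      have "inj_on (\<lambda>t. own (pos t)) {..n}"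
      proof (rule inj_onI)
        fix t t' assume "t \<in> {..n}" "t' \<in> {..n}" "own (pos t) = own (pos t')"
        then show "t = t'"
        proof (cases t t' rule: linorder_cases)
          case less then show ?thesis using dist[OF less allt[of t']] \<open>own (pos t) = own (pos t')\<close> \<open>t' \<in> {..n}\<close> by simp
        next
          case greater then show ?thesis using dist[OF greater allt[of t]] \<open>own (pos t) = own (pos t')\<close> \<open>t \<in> {..n}\<close> by simp
        qed
      qed
      moreover have "(\<lambda>t. own (pos t)) ` {..n} \<subseteq> {..<n}" using own by auto
      ultimately have "card {..n} \<le> card {..<n}" by (intro card_inj_on_le) auto
      then show False by simp
    qed
    have vals: "a \<le> W ?w (pos j) (pos (Suc j))" if j: "j < n" for j
    proof (cases "pos j < s0 + m")
      case True
      then have st: "start (pos j)" using INV by blast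
      note A = arcpos[OF st]
      have "pos (Suc j) = pos j + L (pos j)" using posS[of j] True by simp
      then have "W ?w (pos j) (pos (Suc j)) = util u (P (own (pos j)))"
        using arc_util[of "pos j + L (pos j)" "pos j" m u] A by simp
      then show ?thesis using val own[of "pos j"] by simp
    next
      case False
      then have eq: "pos (Suc j) = pos j" using posS[of j] by simp
      define T0 where "T0 = (LEAST t. \<not> pos t < s0 + m)"
      have T0j: "T0 \<le> j" unfolding T0_def using False by (rule Least_le)
      have befT0: "pos t < s0 + m" if "t < T0" for t using not_less_Least[OF that[unfolded T0_def]] by simp
      have atT0: "pos T0 = s0 + m" using LeastI[of "\<lambda>t. \<not> pos t < s0 + m", OF False] INV[of T0] unfolding T0_def by simp
      let ?O = "(\<lambda>t. own (pos t)) ` {..<T0}"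
      have "card ?O \<le> T0" using card_image_le[of "{..<T0}"] by simp
      then have "card ?O < n" using T0j j by simp
      moreover have "finite ?O" by simp
      ultimately have "\<not> {..<n} \<subseteq> ?O" using card_mono[of ?O "{..<n}"] by auto
      then obtain i where i: "i < n" "i \<notin> ?O" by auto
      have "P i = {}"
      proof (rule ccontr)
        assume "P i \<noteq> {}"
        then obtain g where g: "g \<in> P i" by auto
        then have "g < m" using sub[OF i(1)] by auto
        moreover have "\<forall>j<T0. pos j \<le> pos (Suc j)" using mono1 by simp
        moreover have "pos T0 = pos 0 + m" using atT0 pos0 by simp
        ultimately obtain t where t: "t < T0" "g \<in> arc m (pos t) (pos (Suc t))"
          using arcs_cover[OF m] by blast
        have "start (pos t)" using INV befT0[OF t(1)] by blast
        note A = arcpos[OF this]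
        have "pos (Suc t) = pos t + L (pos t)" using posS[of t] befT0[OF t(1)] by simp
        then have "g \<in> P (own (pos t))" using t A by simp
        then have "i = own (pos t)" using uniq[OF i(1) _ g] own by blast
        then show False using i t by auto
      qed
      then have "a \<le> 0" using val i unfolding util_def by force
      then show ?thesis using eq by (simp add: W_def)
    qed
    have "\<forall>j<n. pos j \<le> pos (Suc j)" using mono1 by simp
    then show ?thesis using termi pos0 vals by (intro exI[of _ pos]) auto
  qed
qed

lemma opt_seq:
  assumes m0: "0 < m" and n1: "1 \<le> n" and nn: "\<forall>g<m. 0 \<le> u g"
  shows "0 \<le> mms m n u \<and> (\<exists>p. (\<forall>i. p i \<le> p (Suc i)) \<and> (\<forall>i. p (i+n) = p i + m) \<and>
           (\<forall>i. mms m n u \<le> W (\<lambda>x. u (x mod m)) (p i) (p (Suc i))))"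
proof -
  obtain P where P: "is_split m n P" "(MIN i\<in>{0..<n}. util u (P i)) = mms m n u"
    using mms_attained[OF m0 n1] by blast
  have fin: "finite ((\<lambda>i. util u (P i)) ` {0..<n})" and ne: "(\<lambda>i. util u (P i)) ` {0..<n} \<noteq> {}"
    using n1 by auto
  have nnP: "0 \<le> util u (P i)" if "i < n" for i
    using split_sub[OF P(1) that] nn unfolding util_def by (intro sum_nonneg) auto
  have a0: "0 \<le> mms m n u" unfolding P(2)[symmetric] using fin ne nnP by (simp add: Min_ge_iff)
  have val: "\<forall>i<n. mms m n u \<le> util u (P i)" unfolding P(2)[symmetric] using fin by (auto intro: Min_le)
  obtain c where c: "\<forall>j<n. c j \<le> c (Suc j)" "c n = c 0 + m" "\<forall>j<n. mms m n u \<le> W (\<lambda>x. u (x mod m)) (c j) (c (Suc j))"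
    using split_bounds[OF m0 n1 P(1) val] by blast
  have per: "\<forall>x. (\<lambda>x. u (x mod m)) (x + m) = (\<lambda>x. u (x mod m)) x" by simp
  show ?thesis using periodic_ext[OF n1 c(1) c(2) c(3) per] a0 by blast
qed

theorem theorem4p8:
  fixes m n :: nat and U :: "nat \<Rightarrow> nat \<Rightarrow> real"
  assumes "m \<ge> 3" and "n \<ge> 1"
    and nonneg: "\<forall>i<n. \<forall>g<m. U i g \<ge> 0"
    and two_types: "\<exists>u1 u2. \<forall>i<n. (\<forall>g<m. U i g = u1 g) \<or> (\<forall>g<m. U i g = u2 g)"
  shows "\<exists>P. sufficient (3/4) m n U P"
proof -
  have m0: "0 < m" using assms(1) by simp
  have n1: "1 \<le> n" using assms(2) by simp
  obtain u1 u2 where tt: "\<forall>i<n. (\<forall>g<m. U i g = u1 g) \<or> (\<forall>g<m. U i g = u2 g)" using two_types by blast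
  define ty where "ty i \<longleftrightarrow> (\<forall>g<m. U i g = u1 g)" for i
  define ia where "ia = (if \<exists>i<n. ty i then (SOME i. i < n \<and> ty i) else 0)"
  define ib where "ib = (if \<exists>i<n. \<not> ty i then (SOME i. i < n \<and> \<not> ty i) else 0)"
  have iaP: "ia < n \<and> ty ia" if "\<exists>i<n. ty i"
  proof -
    have "ia = (SOME i. i < n \<and> ty i)" using that unfolding ia_def by simp
    then show ?thesis using someI_ex[of "\<lambda>i. i < n \<and> ty i"] that by simp
  qed
  have ibP: "ib < n \<and> \<not> ty ib" if "\<exists>i<n. \<not> ty i"
  proof -
    have "ib = (SOME i. i < n \<and> \<not> ty i)" using that unfolding ib_def by simp
    then show ?thesis using someI_ex[of "\<lambda>i. i < n \<and> \<not> ty i"] that by simp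
  qed
  have ia: "ia < n"
  proof (cases "\<exists>i<n. ty i")
    case True then show ?thesis using iaP by blast
  next
    case False then show ?thesis using n1 unfolding ia_def if_not_P[OF False] by simp
  qed
  have ib: "ib < n"
  proof (cases "\<exists>i<n. \<not> ty i")
    case True then show ?thesis using ibP by blast
  next
    case False then show ?thesis using n1 unfolding ib_def if_not_P[OF False] by simp
  qed
  have Ua: "\<forall>g<m. U i g = U ia g" if "i < n" "ty i" for i
  proof -
    have "ty ia" using iaP that by blast
    then show ?thesis using that unfolding ty_def by simp
  qed
  have Ub: "\<forall>g<m. U i g = U ib g" if "i < n" "\<not> ty i" for i
  proof -
    have "ib < n" "\<not> ty ib" using ibP that by blast+
    then have "\<forall>g<m. U ib g = u2 g" using tt unfolding ty_def by blast
    moreover have "\<forall>g<m. U i g = u2 g" using tt that unfolding ty_def by blast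
    ultimately show ?thesis by simp
  qed
  let ?ua = "U ia" and ?ub = "U ib"
  define wa where "wa x = ?ua (x mod m)" for x
  define wb where "wb x = ?ub (x mod m)" for x
  define a where "a = mms m n ?ua"
  define b where "b = mms m n ?ub"
  have nna: "\<forall>g<m. 0 \<le> ?ua g" using nonneg ia by blast
  have nnb: "\<forall>g<m. 0 \<le> ?ub g" using nonneg ib by blast
  obtain p where p: "\<forall>i. p i \<le> p (Suc i)" "\<forall>i. p (i+n) = p i + m" "\<forall>i. a \<le> W wa (p i) (p (Suc i))"
    and a0: "0 \<le> a"
    using opt_seq[OF m0 n1 nna] unfolding a_def wa_def by blast
  obtain q where q: "\<forall>i. q i \<le> q (Suc i)" "\<forall>i. q (i+n) = q i + m" "\<forall>i. b \<le> W wb (q i) (q (Suc i))"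
    and b0: "0 \<le> b"
    using opt_seq[OF m0 n1 nnb] unfolding b_def wb_def by blast
  define k where "k = card {i. i < n \<and> ty i}"
  have kn: "k \<le> n" unfolding k_def using card_mono[of "{..<n}" "{i. i < n \<and> ty i}"] by auto
  define l where "l = n - k"
  have kl: "k + l = n" using kn unfolding l_def by simp
  have wann: "\<forall>x. 0 \<le> wa x" unfolding wa_def using nna m0 by simp
  have wbnn: "\<forall>x. 0 \<le> wb x" unfolding wb_def using nnb m0 by simp
  have waper: "\<forall>x. wa (x + m) = wa x" unfolding wa_def by simp
  have wbper: "\<forall>x. wb (x + m) = wb x" unfolding wb_def by simp
  obtain s where "AL wa wb (3/4*a) (3/4*b) s (s+m) k l"
    using core_thm[OF n1 _ kl wann wbnn waper wbper p q a0 b0] m0 by auto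
  then obtain c \<tau> where c: "c 0 = s" "c n = s + m" "card {i. i<n \<and> \<tau> i} = k"
    "\<forall>i<n. c i \<le> c (Suc i) \<and> (if \<tau> i then 3/4*a \<le> W wa (c i) (c (Suc i)) else 3/4*b \<le> W wb (c i) (c (Suc i)))"
    unfolding AL_def kl by blast
  obtain \<sigma> where \<sigma>: "bij_betw \<sigma> {..<n} {..<n}" "\<forall>i<n. \<tau> (\<sigma> i) = ty i"
    using perm_exists[of n ty \<tau>] c(3) unfolding k_def by auto
  define P where "P i = arc m (c (\<sigma> i)) (c (Suc (\<sigma> i)))" for i
  have mono: "\<forall>j<n. c j \<le> c (Suc j)" using c(4) by blast
  have cn: "c n = c 0 + m" using c by simp
  have split: "is_split m n P" unfolding P_def using split_from[OF m0 mono cn \<sigma>(1)] .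
  have good: "3/4 * mms m n (U i) \<le> util (U i) (P i)" if i: "i < n" for i
  proof -
    let ?j = "\<sigma> i"
    have j: "?j < n" using \<sigma>(1) i unfolding bij_betw_def by auto
    have "c 0 \<le> c ?j" "c (Suc ?j) \<le> c n" using chain_mono[OF mono] j by auto
    then have len: "c (Suc ?j) \<le> c ?j + m" using cn by simp
    have sub: "P i \<subseteq> {0..<m}" unfolding P_def using arc_sub[OF m0] .
    show ?thesis
    proof (cases "ty i")
      case True
      then have t: "\<tau> ?j" using \<sigma>(2) i by simp
      have "util (U i) (P i) = util ?ua (P i)" using util_cong[OF sub Ua[OF i True]] .
      also have "\<dots> = W wa (c ?j) (c (Suc ?j))" unfolding P_def wa_def using arc_util[OF len] .
      finally have "util (U i) (P i) = W wa (c ?j) (c (Suc ?j))" .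
      moreover have "3/4*a \<le> W wa (c ?j) (c (Suc ?j))" using c(4) j t by auto
      moreover have "mms m n (U i) = a" unfolding a_def using mms_cong[OF Ua[OF i True]] .
      ultimately show ?thesis by simp
    next
      case False
      then have t: "\<not> \<tau> ?j" using \<sigma>(2) i by simp
      have "util (U i) (P i) = util ?ub (P i)" using util_cong[OF sub Ub[OF i False]] .
      also have "\<dots> = W wb (c ?j) (c (Suc ?j))" unfolding P_def wb_def using arc_util[OF len] .
      finally have "util (U i) (P i) = W wb (c ?j) (c (Suc ?j))" .
      moreover have "3/4*b \<le> W wb (c ?j) (c (Suc ?j))" using c(4) j t by auto
      moreover have "mms m n (U i) = b" unfolding b_def using mms_cong[OF Ub[OF i False]] .
      ultimately show ?thesis by simp
    qed
  qed
  show ?thesis unfolding sufficient_def using split good by blast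
qed

end
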